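(* Let $M$ be observation-rational, and suppose there exists an event $e\in\varepsilon$ that is event-rational and such that $\alpha$ is an $e$-signal. Then for every belief state $b$, $b\diamond\alpha$ is a belief state if and only if $\alpha$ is satisfiable (i.e. not $\vdash\lnot\alpha$).
   Context: Fix a finite propositional vocabulary; $L$ is the classical propositional language and $W$ the finite set of all worlds (valuations). "$\vdash\lnot\alpha$" means $\alpha$ is unsatisfiable. A belief state is a probability distribution $b$ on $W$. A model is $M=\langle W,\varepsilon,T,E,O,\mathit{os}\rangle$ with $\varepsilon$ a finite set of events; $T:W\times\varepsilon\times W\to[0,1]$ with $\sum_{w'}T(w,e,w')=1$ for all $w,e$; $E(e,w)\in[0,1]$ the probability of $e$ in $w$; $O:L\times W\to[0,1]$ an observation function ($O(\alpha,w)$ = probability of observing $\alpha$ in $w$, equal for equivalent sentences); $\mathit{os}:L\times W\to[0,1]$. Update: $(b\diamond\alpha)(w')=\frac1\gamma O(\alpha,w')\sum_{w\in W}\sum_{e\in\varepsilon}T(w,e,w')E(e,w)b(w)$ with $\gamma$ the normalizing sum; $b\diamond\alpha$ is a belief state iff $\gamma>0$ and undefined otherwise. $M$ is observation-rational iff for every $\alpha$ with $\vdash\lnot\alpha$, $O(\alpha,w)=0$ for all $w$. An event $e$ is event-rational iff for all $w\in W$: there exists $w'$ with $T(w,e,w')>0$ iff $E(e,w)>0$. $\alpha$ is an $e$-signal iff for all $w'\in W$: there exists $w$ with $T(w,e,w')>0$ iff $O(\alpha,w')>0$. *)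

theory Defs
  imports Complex_Main
begin

datatype 'v form =
    Atom 'v
  | FTrue
  | FFalse
  | Neg "'v form"
  | Conj "'v form" "'v form"
  | Disj "'v form" "'v form"
  | Impl "'v form" "'v form"

type_synonym 'v world = "'v \<Rightarrow> bool"

fun sat :: "'v world \<Rightarrow> 'v form \<Rightarrow> bool" where
  "sat w (Atom p) = w p"
| "sat w FTrue = True"
| "sat w FFalse = False"
| "sat w (Neg a) = (\<not> sat w a)"
| "sat w (Conj a b) = (sat w a \<and> sat w b)"
| "sat w (Disj a b) = (sat w a \<or> sat w b)"
| "sat w (Impl a b) = (sat w a \<longrightarrow> sat w b)"

text \<open>\<turnstile> \<not>\<alpha>: alpha is unsatisfiable.\<close>
definition proves_neg :: "'v form \<Rightarrow> bool" where
  "proves_neg a \<longleftrightarrow> (\<forall>w. \<not> sat w a)"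

definition equiv_form :: "'v form \<Rightarrow> 'v form \<Rightarrow> bool" where
  "equiv_form a c \<longleftrightarrow> (\<forall>w. sat w a = sat w c)"

definition belief_state :: "('v::finite world \<Rightarrow> real) \<Rightarrow> bool" where
  "belief_state b \<longleftrightarrow> (\<forall>w. 0 \<le> b w) \<and> (\<Sum>w\<in>UNIV. b w) = 1"

text \<open>A model M = (W, eps, T, E, O, os); W is UNIV of worlds.\<close>
record ('v, 'e) model =
  events :: "'e set"
  trans :: "'v world \<Rightarrow> 'e \<Rightarrow> 'v world \<Rightarrow> real"
  evprob :: "'e \<Rightarrow> 'v world \<Rightarrow> real"
  obs :: "'v form \<Rightarrow> 'v world \<Rightarrow> real"
  os :: "'v form \<Rightarrow> 'v world \<Rightarrow> real"

definition is_model :: "('v::finite, 'e) model \<Rightarrow> bool" where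
  "is_model M \<longleftrightarrow>
     finite (events M)
   \<and> (\<forall>w e w'. 0 \<le> trans M w e w' \<and> trans M w e w' \<le> 1)
   \<and> (\<forall>w e. (\<Sum>w'\<in>UNIV. trans M w e w') = 1)
   \<and> (\<forall>e w. 0 \<le> evprob M e w \<and> evprob M e w \<le> 1)
   \<and> (\<forall>a w. 0 \<le> obs M a w \<and> obs M a w \<le> 1)
   \<and> (\<forall>a c w. equiv_form a c \<longrightarrow> obs M a w = obs M c w)
   \<and> (\<forall>a w. 0 \<le> os M a w \<and> os M a w \<le> 1)"

definition gamma :: "('v::finite, 'e) model \<Rightarrow> ('v world \<Rightarrow> real) \<Rightarrow> 'v form \<Rightarrow> real" where
  "gamma M b a = (\<Sum>w'\<in>UNIV. obs M a w' *
       (\<Sum>w\<in>UNIV. \<Sum>e\<in>events M. trans M w e w' * evprob M e w * b w))"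

definition update :: "('v::finite, 'e) model \<Rightarrow> ('v world \<Rightarrow> real) \<Rightarrow> 'v form
                       \<Rightarrow> ('v world \<Rightarrow> real) option" where
  "update M b a =
     (if gamma M b a > 0 then
        Some (\<lambda>w'. (1 / gamma M b a) * obs M a w' *
          (\<Sum>w\<in>UNIV. \<Sum>e\<in>events M. trans M w e w' * evprob M e w * b w))
      else None)"

definition observation_rational :: "('v::finite, 'e) model \<Rightarrow> bool" where
  "observation_rational M \<longleftrightarrow> (\<forall>a. proves_neg a \<longrightarrow> (\<forall>w. obs M a w = 0))"

definition event_rational :: "('v::finite, 'e) model \<Rightarrow> 'e \<Rightarrow> bool" where
  "event_rational M e \<longleftrightarrow> (\<forall>w. (\<exists>w'. trans M w e w' > 0) \<longleftrightarrow> evprob M e w > 0)"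

definition is_signal :: "('v::finite, 'e) model \<Rightarrow> 'v form \<Rightarrow> 'e \<Rightarrow> bool" where
  "is_signal M a e \<longleftrightarrow> (\<forall>w'. (\<exists>w. trans M w e w' > 0) \<longleftrightarrow> obs M a w' > 0)"

end

theory Submission
  imports Defs
begin

theorem proposition3:
  fixes M :: "('v::finite, 'e) model" and a :: "'v form"
  assumes "is_model M"
    and "observation_rational M"
    and "\<exists>e\<in>events M. event_rational M e \<and> is_signal M a e"
  shows "\<forall>b. belief_state b \<longrightarrow>
           ((\<exists>b'. update M b a = Some b' \<and> belief_state b') \<longleftrightarrow> \<not> proves_neg a)"
proof (intro allI impI)
  fix b :: "'v world \<Rightarrow> real" assume bs: "belief_state b"
  from assms(1) have fin: "finite (events M)"
    and tr: "\<And>w e w'. 0 \<le> trans M w e w'"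
    and trs: "\<And>w e. (\<Sum>w'\<in>UNIV. trans M w e w') = 1"
    and ev: "\<And>e w. 0 \<le> evprob M e w"
    and ob: "\<And>a w. 0 \<le> obs M a w"
    unfolding is_model_def by auto
  from bs have bn: "\<And>w. 0 \<le> b w" and bsum: "(\<Sum>w\<in>UNIV. b w) = 1"
    unfolding belief_state_def by auto
  define f where "f w' = (\<Sum>w\<in>UNIV. \<Sum>e\<in>events M. trans M w e w' * evprob M e w * b w)" for w'
  have fn: "0 \<le> f w'" for w'
    unfolding f_def by (intro sum_nonneg mult_nonneg_nonneg tr ev bn)
  have g: "gamma M b a = (\<Sum>w'\<in>UNIV. obs M a w' * f w')"
    unfolding gamma_def f_def by simp
  have gpos: "gamma M b a > 0"
  proof -
    obtain e where e: "e \<in> events M" "event_rational M e" "is_signal M a e" using assms(3) by blast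
    obtain w where w: "b w > 0"
    proof (rule ccontr)
      assume "\<not> thesis"
      then have "\<forall>w. b w = 0" using bn that by (metis less_eq_real_def)
      then show False using bsum by simp
    qed
    obtain w' where w': "trans M w e w' > 0"
    proof (rule ccontr)
      assume "\<not> thesis"
      then have "\<forall>w'. trans M w e w' = 0" using tr that by (metis less_eq_real_def)
      then show False using trs[of w e] by simp
    qed
    have evp: "evprob M e w > 0" using e(2) w' unfolding event_rational_def by blast
    have obp: "obs M a w' > 0" using e(3) w' unfolding is_signal_def by blast
    have "0 < trans M w e w' * evprob M e w * b w" using w w' evp by simp
    also have "\<dots> \<le> (\<Sum>e\<in>events M. trans M w e w' * evprob M e w * b w)"
      by (rule member_le_sum) (use e(1) fin in \<open>auto intro: mult_nonneg_nonneg tr ev bn\<close>)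
    also have "\<dots> \<le> f w'" unfolding f_def
      by (rule member_le_sum[where f="\<lambda>w. \<Sum>e\<in>events M. trans M w e w' * evprob M e w * b w"])
         (auto intro!: sum_nonneg mult_nonneg_nonneg tr ev bn)
    finally have fp: "f w' > 0" .
    have "0 < obs M a w' * f w'" using fp obp by simp
    also have "\<dots> \<le> (\<Sum>w'\<in>UNIV. obs M a w' * f w')"
      by (rule member_le_sum) (auto intro: mult_nonneg_nonneg ob fn)
    finally show ?thesis using g by simp
  qed
  show "(\<exists>b'. update M b a = Some b' \<and> belief_state b') \<longleftrightarrow> \<not> proves_neg a"
  proof
    assume "\<exists>b'. update M b a = Some b' \<and> belief_state b'"
    then have "gamma M b a > 0" unfolding update_def by (auto split: if_splits)
    show "\<not> proves_neg a"
    proof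
      assume "proves_neg a"
      then have "\<forall>w. obs M a w = 0" using assms(2) unfolding observation_rational_def by blast
      then have "gamma M b a = 0" unfolding g by simp
      with \<open>gamma M b a > 0\<close> show False by simp
    qed
  next
    assume "\<not> proves_neg a"
    define b' where "b' w' = (1 / gamma M b a) * obs M a w' * f w'" for w'
    have "update M b a = Some b'" unfolding update_def b'_def f_def using gpos by auto
    moreover have "belief_state b'"
      unfolding belief_state_def
    proof
      show "\<forall>w. 0 \<le> b' w" unfolding b'_def using gpos ob fn by (simp add: divide_nonneg_pos)
      have "(\<Sum>w\<in>UNIV. b' w) = (1 / gamma M b a) * (\<Sum>w\<in>UNIV. obs M a w * f w)"
        unfolding b'_def by (simp add: sum_distrib_left mult.assoc)
      then show "(\<Sum>w\<in>UNIV. b' w) = 1" using gpos g by simp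
    qed
    ultimately show "\<exists>b'. update M b a = Some b' \<and> belief_state b'" by blast
  qed
qed

end
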